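(* For every integer $m\ge1$ and every $n\ge0$, $$v_{2n+1}(x,m,s,q)=\sum_{k=0}^{n}(-1)^k\begin{bmatrix}2n+1\\2k+1\end{bmatrix}\frac{[2m+2n]!\,[m+2n-2k-1]!}{[m+2n]!\,[2m+2n-2k-1]!}\,\frac{T_{2k+1}(q)\,x^{2k+1}}{(-q^{m+2n-2k};q)_{2k+1}}\,v_{2n-2k}(x,m,s,q).$$
   Context: $q$ is an indeterminate; $[n]=\frac{1-q^n}{1-q}$, $[n]!=[1]\cdots[n]$, $[0]!=1$, $\begin{bmatrix}n\\k\end{bmatrix}=\frac{[n]!}{[k]![n-k]!}$, $(a;q)_n=(1-a)(1-qa)\cdots(1-q^{n-1}a)$, $(a;q)_0=1$. For an integer $m\ge 0$ and indeterminates $x,s$, $$v_n(x,m,s,q)=\sum_{k=0}^{\lfloor n/2\rfloor}(-s)^kq^{k^2}\frac{[n]!}{[k]!\,[n-2k]!}\,\frac{[m+n-k-1]!}{[m+n-1]!}\,\frac{1}{(-q;q)_k\,(-q^{n+m-k};q)_k}\,x^{n-2k}\quad(n\ge1),\qquad v_0=1.$$ With $e_q(z)=\sum_{n\ge0}\frac{z^n}{[n]!}$, the $q$-tangent numbers $T_{2n+1}(q)$ are defined by $\frac{e_q(z)-e_q(-z)}{e_q(z)+e_q(-z)}=\sum_{n\ge0}(-1)^n\frac{T_{2n+1}(q)}{[2n+1]!}z^{2n+1}$ (so $T_1(q)=1$, $T_3(q)=q(1+q)$). *)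

theory Defs
  imports "HOL-Computational_Algebra.Formal_Power_Series"
begin

definition qint :: "'a::field \<Rightarrow> nat \<Rightarrow> 'a" where
  "qint q n = (\<Sum>i<n. q ^ i)"

definition qfact :: "'a::field \<Rightarrow> nat \<Rightarrow> 'a" where
  "qfact q n = (\<Prod>i=1..n. qint q i)"

definition qbinom :: "'a::field \<Rightarrow> nat \<Rightarrow> nat \<Rightarrow> 'a" where
  "qbinom q n k = qfact q n / (qfact q k * qfact q (n - k))"

definition qpoch :: "'a::field \<Rightarrow> 'a \<Rightarrow> nat \<Rightarrow> 'a" where
  "qpoch a q n = (\<Prod>i<n. (1 - q ^ i * a))"

definition vpoly :: "'a::field \<Rightarrow> 'a \<Rightarrow> nat \<Rightarrow> 'a \<Rightarrow> nat \<Rightarrow> 'a" where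
  "vpoly x s m q n =
     (if n = 0 then 1 else
      (\<Sum>k\<le>n div 2. (- s) ^ k * q ^ (k ^ 2)
          * (qfact q n / (qfact q k * qfact q (n - 2 * k)))
          * (qfact q (m + n - k - 1) / qfact q (m + n - 1))
          * (1 / (qpoch (- q) q k * qpoch (- (q ^ (n + m - k))) q k))
          * x ^ (n - 2 * k)))"

definition qexp_fps :: "'a::field \<Rightarrow> 'a fps" where
  "qexp_fps q = Abs_fps (\<lambda>n. 1 / qfact q n)"

definition qexp_neg_fps :: "'a::field \<Rightarrow> 'a fps" where
  "qexp_neg_fps q = Abs_fps (\<lambda>n. (- 1) ^ n / qfact q n)"

definition qtan_fps :: "'a::field \<Rightarrow> 'a fps" where
  "qtan_fps q = (qexp_fps q - qexp_neg_fps q) / (qexp_fps q + qexp_neg_fps q)"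

text \<open>qtangent q n = T_{2n+1}(q).\<close>
definition qtangent :: "'a::field \<Rightarrow> nat \<Rightarrow> 'a" where
  "qtangent q n = (- 1) ^ n * qfact q (2 * n + 1) * fps_nth (qtan_fps q) (2 * n + 1)"

end

theory Submission
  imports Defs
begin

unbundle fps_syntax

locale qctx =
  fixes q :: "'a::field_char_0"
  assumes qi_nz: "\<And>j. j \<ge> 1 \<Longrightarrow> qint q j \<noteq> 0"
    and pl_nz: "\<And>j. j \<ge> 1 \<Longrightarrow> 1 + q ^ j \<noteq> 0"
begin

abbreviation qf where "qf \<equiv> qfact q"
abbreviation cc where "cc \<equiv> qpoch (- q) q"
definition gg where "gg n = qf n * cc n"
definition ff where "ff a i = gg (a + i - 1) / qf (2 * a + i - 1)"
definition RR where "RR a P = (\<Sum>i\<le>P. (-1) ^ (P - i) * ff a i / (qf (P - i) * qf i))"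

lemma qint_0[simp]: "qint q 0 = 0" by (simp add: qint_def)
lemma qint_1[simp]: "qint q (Suc 0) = 1" by (simp add: qint_def)

lemma qint_add: "qint q (a + b) = qint q a + q ^ a * qint q b"
  by (induction b) (simp_all add: qint_def algebra_simps power_add)

lemma qint_double: "qint q (2 * n) = qint q n * (1 + q ^ n)"
proof -
  have "2 * n = n + n" by simp
  then have "qint q (2 * n) = qint q (n + n)" by (simp only:)
  then show ?thesis using qint_add[of n n] by (simp add: algebra_simps)
qed

lemma qf_Suc: "qf (Suc n) = qf n * qint q (Suc n)"
  by (simp add: qfact_def prod.nat_ivl_Suc' mult.commute)

lemma qf_0[simp]: "qf 0 = 1" by (simp add: qfact_def)

lemma qf_nz: "qf n \<noteq> 0"
  by (induction n) (simp_all add: qf_Suc qi_nz)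

lemma qpoch_Suc: "qpoch a q (Suc n) = qpoch a q n * (1 - q ^ n * a)"
  by (simp add: qpoch_def)

lemma cc_Suc: "cc (Suc n) = cc n * (1 + q ^ Suc n)"
  by (simp add: qpoch_Suc)

lemma cc_nz: "cc n \<noteq> 0"
proof (induction n)
  case 0 then show ?case by (simp add: qpoch_def)
next
  case (Suc n) then show ?case using pl_nz[of "Suc n"] by (simp only: cc_Suc) simp
qed

lemma cc_shift: "cc (a + k) = cc a * qpoch (- (q ^ (a + 1))) q k"
  by (induction k) (simp_all add: cc_Suc qpoch_Suc qpoch_def power_add algebra_simps)

lemma qpoch_nz: "qpoch (- (q ^ (a + 1))) q k \<noteq> 0"
  using cc_shift[of a k] cc_nz by auto

lemma gg_Suc: "gg (Suc n) = gg n * qint q (2 * Suc n)"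
proof -
  have "qint q (2 * Suc n) = qint q (Suc n) * (1 + q ^ Suc n)" by (rule qint_double)
  then show ?thesis by (simp only: gg_def qf_Suc cc_Suc) (simp add: algebra_simps)
qed

lemma ff_diff:
  assumes "a \<ge> 1"
  shows "ff a (i + 1) - q ^ i * ff a i = qint q i * gg (a + i - 1) / qf (2 * a + i)"
proof -
  have e1: "gg (a + i) = gg (a + i - 1) * qint q (2 * (a + i))"
    using gg_Suc[of "a + i - 1"] assms by (simp add: Suc_diff_le)
  have e2: "qf (2 * a + i) = qf (2 * a + i - 1) * qint q (2 * a + i)"
    using qf_Suc[of "2 * a + i - 1"] assms by (simp add: Suc_diff_le)
  have e3: "qint q (2 * (a + i)) = qint q i + q ^ i * qint q (2 * a + i)"
    using qint_add[of i "2 * a + i"] by (simp add: algebra_simps)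
  have nz: "qint q (2 * a + i) \<noteq> 0" using assms qi_nz by simp
  have nz2: "qf (2 * a + i - 1) \<noteq> 0" by (rule qf_nz)
  show ?thesis
    unfolding ff_def using e1 e2 e3 nz nz2
    by (simp add: field_simps)
qed

lemma RR_1:
  assumes "a \<ge> 1" shows "RR a 1 = 0"
proof -
  have e1: "gg a = gg (a - 1) * qint q (2 * a)"
    using gg_Suc[of "a - 1"] assms by (simp add: Suc_diff_le)
  have e2: "qf (2 * a) = qf (2 * a - 1) * qint q (2 * a)"
    using qf_Suc[of "2 * a - 1"] assms by (simp add: Suc_diff_le)
  have nz: "qint q (2 * a) \<noteq> 0" using assms qi_nz by simp
  have "qf 1 = 1" using qf_Suc[of 0] by simp
  then show ?thesis using e1 e2 nz qf_nz[of "2*a - 1"]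
    by (simp add: RR_def ff_def field_simps)
qed

lemma RR_step:
  assumes "a \<ge> 1"
  shows "qint q (P + 2) * RR a (P + 2) = RR (a + 1) P"
proof -
  define t where "t i = (-1) ^ (P + 2 - i) * ff a i / (qf (P + 2 - i) * qf i)" for i
  have "qint q (P + 2) * RR a (P + 2) = (\<Sum>i\<le>P+2. t i * (qint q i + q ^ i * qint q (P + 2 - i)))"
    unfolding RR_def t_def sum_distrib_left
  proof (rule sum.cong[OF refl])
    fix i assume "i \<in> {..P+2}"
    then have "qint q (P + 2) = qint q (i + (P + 2 - i))" by simp
    then show "qint q (P + 2) * ((- 1) ^ (P + 2 - i) * ff a i / (qf (P + 2 - i) * qf i)) =
         (- 1) ^ (P + 2 - i) * ff a i / (qf (P + 2 - i) * qf i) * (qint q i + q ^ i * qint q (P + 2 - i))"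
      by (simp add: qint_add)
  qed
  also have "\<dots> = (\<Sum>i\<le>P+2. t i * qint q i) + (\<Sum>i\<le>P+2. t i * q ^ i * qint q (P + 2 - i))"
    by (simp add: sum.distrib algebra_simps)
  also have "(\<Sum>i\<le>P+2. t i * qint q i) = (\<Sum>i\<le>P+1. (-1) ^ (P + 1 - i) * ff a (i + 1) / (qf (P + 1 - i) * qf i))"
  proof -
    have "(\<Sum>i\<le>P+2. t i * qint q i) = (\<Sum>i\<le>Suc (P+1). t i * qint q i)" by simp
    also have "\<dots> = t 0 * qint q 0 + (\<Sum>i\<le>P+1. t (Suc i) * qint q (Suc i))"
      by (rule sum.atMost_Suc_shift)
    also have "\<dots> = (\<Sum>i\<le>P+1. (-1) ^ (P + 1 - i) * ff a (i + 1) / (qf (P + 1 - i) * qf i))"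
    proof -
      have "t (Suc i) * qint q (Suc i) = (-1) ^ (P + 1 - i) * ff a (i + 1) / (qf (P + 1 - i) * qf i)"
        if "i \<le> P + 1" for i
      proof -
        have "P + 2 - Suc i = P + 1 - i" by simp
        moreover have "qint q (Suc i) \<noteq> 0" using qi_nz by simp
        ultimately show ?thesis unfolding t_def using qf_nz[of i] qf_nz[of "P+1-i"]
          by (simp add: qf_Suc field_simps)
      qed
      then show ?thesis by simp
    qed
    finally show ?thesis .
  qed
  also have "(\<Sum>i\<le>P+2. t i * q ^ i * qint q (P + 2 - i)) = (\<Sum>i\<le>P+1. - ((-1) ^ (P + 1 - i) * (q ^ i * ff a i) / (qf (P + 1 - i) * qf i)))"
  proof -
    have "(\<Sum>i\<le>P+2. t i * q ^ i * qint q (P + 2 - i)) = (\<Sum>i\<le>Suc (P+1). t i * q ^ i * qint q (P + 2 - i))" by simp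
    also have "\<dots> = (\<Sum>i\<le>P+1. t i * q ^ i * qint q (P + 2 - i))" by simp
    also have "\<dots> = (\<Sum>i\<le>P+1. - ((-1) ^ (P + 1 - i) * (q ^ i * ff a i) / (qf (P + 1 - i) * qf i)))"
    proof (rule sum.cong[OF refl])
      fix i assume "i \<in> {..P+1}"
      then have i: "i \<le> P + 1" by simp
      then have e: "P + 2 - i = Suc (P + 1 - i)" by simp
      have "qint q (Suc (P + 1 - i)) \<noteq> 0" using qi_nz by simp
      then show "t i * q ^ i * qint q (P + 2 - i) = - ((-1) ^ (P + 1 - i) * (q ^ i * ff a i) / (qf (P + 1 - i) * qf i))"
        unfolding t_def e using qf_nz[of i] qf_nz[of "P+1-i"]
        by (simp add: qf_Suc field_simps)
    qed
    finally show ?thesis .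
  qed
  also have "(\<Sum>i\<le>P+1. (-1) ^ (P + 1 - i) * ff a (i + 1) / (qf (P + 1 - i) * qf i))
      + (\<Sum>i\<le>P+1. - ((-1) ^ (P + 1 - i) * (q ^ i * ff a i) / (qf (P + 1 - i) * qf i)))
      = (\<Sum>i\<le>P+1. (-1) ^ (P + 1 - i) * (ff a (i + 1) - q ^ i * ff a i) / (qf (P + 1 - i) * qf i))"
    by (simp add: sum.distrib[symmetric] diff_divide_distrib right_diff_distrib)
  also have "\<dots> = (\<Sum>i\<le>Suc P. (-1) ^ (P + 1 - i) * (qint q i * gg (a + i - 1) / qf (2 * a + i)) / (qf (P + 1 - i) * qf i))"
    using ff_diff[OF assms] by simp
  also have "\<dots> = (\<Sum>i\<le>P. (-1) ^ (P + 1 - Suc i) * (qint q (Suc i) * gg (a + Suc i - 1) / qf (2 * a + Suc i)) / (qf (P + 1 - Suc i) * qf (Suc i)))"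
    by (subst sum.atMost_Suc_shift) simp
  also have "\<dots> = RR (a + 1) P"
    unfolding RR_def
  proof (rule sum.cong[OF refl])
    fix i assume "i \<in> {..P}"
    have "qint q (Suc i) \<noteq> 0" using qi_nz by simp
    moreover have "ff (a + 1) i = gg (a + i) / qf (2 * a + Suc i)"
      by (simp add: ff_def)
    ultimately show "(-1) ^ (P + 1 - Suc i) * (qint q (Suc i) * gg (a + Suc i - 1) / qf (2 * a + Suc i)) / (qf (P + 1 - Suc i) * qf (Suc i))
        = (- 1) ^ (P - i) * ff (a + 1) i / (qf (P - i) * qf i)"
      using qf_nz[of i] by (simp add: qf_Suc field_simps)
  qed
  finally show ?thesis .
qed

lemma RR_odd: "a \<ge> 1 \<Longrightarrow> RR a (2 * k + 1) = 0"
proof (induction k arbitrary: a)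
  case 0 then show ?case using RR_1 by simp
next
  case (Suc k)
  have "qint q (2 * k + 1 + 2) * RR a (2 * k + 1 + 2) = RR (a + 1) (2 * k + 1)"
    using RR_step Suc.prems by blast
  also have "\<dots> = 0" using Suc.IH by simp
  finally have "qint q (2 * k + 1 + 2) * RR a (2 * k + 1 + 2) = 0" .
  moreover have "qint q (2 * k + 1 + 2) \<noteq> 0" using qi_nz by simp
  ultimately have "RR a (2 * k + 1 + 2) = 0" by simp
  then show ?case by (simp add: algebra_simps)
qed

end

locale vctx = qctx q for q :: "'a::field_char_0" +
  fixes x s :: 'a and m :: nat
  assumes m1: "m \<ge> 1"
begin

definition GG where "GG k = (- s) ^ k * q ^ (k ^ 2) / (qf k * cc k)"
definition uu where "uu j = vpoly x s m q j * qf (m + j - 1) * cc (m + j - 1) / (qf j * qf (2 * m + j - 1))"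

lemma uu_expand:
  "uu j = (\<Sum>k\<le>j div 2. GG k * (x ^ (j - 2 * k) / qf (j - 2 * k) * (gg (m + j - k - 1) / qf (2 * m + j - 1))))"
proof (cases "j = 0")
  case True
  then show ?thesis using qf_nz[of "m - 1"] qf_nz[of "2 * m - 1"]
    by (simp add: uu_def vpoly_def GG_def gg_def qpoch_def)
next
  case False
  have "uu j = (\<Sum>k\<le>j div 2. (- s) ^ k * q ^ (k ^ 2)
          * (qf j / (qf k * qf (j - 2 * k)))
          * (qf (m + j - k - 1) / qf (m + j - 1))
          * (1 / (qpoch (- q) q k * qpoch (- (q ^ (j + m - k))) q k))
          * x ^ (j - 2 * k)) * (qf (m + j - 1) * cc (m + j - 1) / (qf j * qf (2 * m + j - 1)))"
    using False by (simp add: uu_def vpoly_def)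
  also have "\<dots> = (\<Sum>k\<le>j div 2. GG k * (x ^ (j - 2 * k) / qf (j - 2 * k) * (gg (m + j - k - 1) / qf (2 * m + j - 1))))"
    unfolding sum_distrib_right
  proof (rule sum.cong[OF refl])
    fix k assume "k \<in> {..j div 2}"
    then have k: "2 * k \<le> j" by auto
    have e: "cc (m + j - 1) = cc (m + j - k - 1) * qpoch (- (q ^ (j + m - k))) q k"
    proof -
      have h: "cc (m + j - k - 1 + k) = cc (m + j - k - 1) * qpoch (- (q ^ (m + j - k - 1 + 1))) q k"
        by (rule cc_shift)
      have a1: "m + j - k - 1 + k = m + j - 1" and a2: "m + j - k - 1 + 1 = j + m - k"
        using k m1 by auto
      show ?thesis using h unfolding a1 a2 .
    qed
    have nz: "qpoch (- (q ^ (j + m - k))) q k \<noteq> 0"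
    proof -
      have "j + m - k = (j + m - k - 1) + 1" using k m1 by auto
      then show ?thesis using qpoch_nz[of "j + m - k - 1" k] by simp
    qed
    show "(- s) ^ k * q ^ (k ^ 2)
          * (qf j / (qf k * qf (j - 2 * k)))
          * (qf (m + j - k - 1) / qf (m + j - 1))
          * (1 / (qpoch (- q) q k * qpoch (- (q ^ (j + m - k))) q k))
          * x ^ (j - 2 * k) * (qf (m + j - 1) * cc (m + j - 1) / (qf j * qf (2 * m + j - 1)))
        = GG k * (x ^ (j - 2 * k) / qf (j - 2 * k) * (gg (m + j - k - 1) / qf (2 * m + j - 1)))"
      unfolding GG_def gg_def e using nz qf_nz[of j] qf_nz[of k] qf_nz[of "j - 2 * k"]
        qf_nz[of "m + j - 1"] qf_nz[of "2 * m + j - 1"] cc_nz[of k] cc_nz[of "m + j - k - 1"]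
      by (simp add: field_simps)
  qed
  finally show ?thesis .
qed

lemma inner_zero:
  assumes "odd N" "2 * k \<le> N"
  shows "(\<Sum>j\<in>{2*k..N}. x ^ (j - 2 * k) / qf (j - 2 * k) * (gg (m + j - k - 1) / qf (2 * m + j - 1))
          * ((- x) ^ (N - j) / qf (N - j))) = 0"
proof -
  define P where "P = N - 2 * k"
  have NP: "N = P + 2 * k" using assms P_def by simp
  define F where "F j = x ^ (j - 2 * k) / qf (j - 2 * k) * (gg (m + j - k - 1) / qf (2 * m + j - 1))
          * ((- x) ^ (N - j) / qf (N - j))" for j
  have "(\<Sum>j\<in>{2*k..N}. F j) = (\<Sum>i\<in>{0..P}. F (i + 2*k))"
    by (rule sum.reindex_bij_witness[of _ "\<lambda>i. i + 2*k" "\<lambda>j. j - 2*k"]) (use NP in auto)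
  also have "\<dots> = (\<Sum>i\<le>P. x ^ P * ((-1) ^ (P - i) * ff (m + k) i / (qf (P - i) * qf i)))"
  proof (rule sum.cong)
    show "{0..P} = {..P}" by auto
  next
    fix i assume "i \<in> {..P}"
    then have i: "i \<le> P" by simp
    have pm: "(- x) ^ (P - i) = (-1) ^ (P - i) * x ^ (P - i)" by (rule power_minus)
    have pa: "x ^ i * x ^ (P - i) = x ^ P"
      using i by (metis power_add le_add_diff_inverse)
    have e1: "m + (i + 2*k) - k - 1 = m + k + i - 1" "2 * m + (i + 2*k) - 1 = 2 * (m + k) + i - 1"
      "N - (i + 2*k) = P - i" "i + 2*k - 2*k = i" using NP by auto
    have "F (i + 2 * k) = x ^ i / qf i * (gg (m + k + i - 1) / qf (2 * (m + k) + i - 1))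
          * ((- x) ^ (P - i) / qf (P - i))"
      unfolding F_def e1 by (rule refl)
    also have "\<dots> = x ^ P * ((-1) ^ (P - i) * ff (m + k) i / (qf (P - i) * qf i))"
      unfolding ff_def pm pa[symmetric] using qf_nz[of i] qf_nz[of "P - i"] qf_nz[of "2 * (m + k) + i - 1"]
      by (simp add: field_simps)
    finally show "F (i + 2 * k) = x ^ P * ((-1) ^ (P - i) * ff (m + k) i / (qf (P - i) * qf i))" .
  qed
  also have "\<dots> = x ^ P * RR (m + k) P" by (simp only: RR_def sum_distrib_left)
  also have "RR (m + k) P = 0"
  proof -
    have "odd P" using assms NP by simp
    then obtain t where "P = 2 * t + 1" by (rule oddE)
    then show ?thesis using RR_odd[of "m + k" t] m1 by simp
  qed
  finally show ?thesis by (simp add: F_def)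
qed

lemma key_odd:
  assumes "odd N"
  shows "(\<Sum>j\<le>N. uu j * ((- x) ^ (N - j) / qf (N - j))) = 0"
proof -
  define H where "H j k = x ^ (j - 2 * k) / qf (j - 2 * k) * (gg (m + j - k - 1) / qf (2 * m + j - 1))
          * ((- x) ^ (N - j) / qf (N - j))" for j k
  have "(\<Sum>j\<le>N. uu j * ((- x) ^ (N - j) / qf (N - j))) = (\<Sum>j\<le>N. \<Sum>k\<le>N. if 2 * k \<le> j then GG k * H j k else 0)"
  proof (rule sum.cong[OF refl])
    fix j assume "j \<in> {..N}"
    then have j: "j \<le> N" by simp
    have "{k \<in> {..N}. 2 * k \<le> j} = {..j div 2}" using j by auto
    then have "(\<Sum>k\<le>N. if 2 * k \<le> j then GG k * H j k else 0) = (\<Sum>k\<le>j div 2. GG k * H j k)"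
      by (simp add: sum.inter_filter[symmetric])
    then show "uu j * ((- x) ^ (N - j) / qf (N - j)) = (\<Sum>k\<le>N. if 2 * k \<le> j then GG k * H j k else 0)"
      by (simp only: uu_expand sum_distrib_right H_def mult.assoc)
  qed
  also have "\<dots> = (\<Sum>k\<le>N. \<Sum>j\<le>N. if 2 * k \<le> j then GG k * H j k else 0)"
    by (rule sum.swap)
  also have "\<dots> = (\<Sum>k\<le>N. GG k * (\<Sum>j\<in>{2*k..N}. H j k))"
  proof (rule sum.cong[OF refl])
    fix k
    have "{j \<in> {..N}. 2 * k \<le> j} = {2*k..N}" by auto
    then show "(\<Sum>j\<le>N. if 2 * k \<le> j then GG k * H j k else 0) = GG k * (\<Sum>j\<in>{2*k..N}. H j k)"
      by (simp add: sum.inter_filter[symmetric] sum_distrib_left)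
  qed
  also have "\<dots> = 0"
  proof (rule sum.neutral, rule ballI)
    fix k assume "k \<in> {..N}"
    show "GG k * (\<Sum>j\<in>{2*k..N}. H j k) = 0"
    proof (cases "2 * k \<le> N")
      case True
      then show ?thesis using inner_zero[OF assms True] by (simp add: H_def)
    next
      case False
      then show ?thesis by simp
    qed
  qed
  finally show ?thesis .
qed


definition sc :: "'a fps \<Rightarrow> 'a fps" where "sc F = Abs_fps (\<lambda>n. x ^ n * F $ n)"

lemma sc_nth[simp]: "sc F $ n = x ^ n * F $ n" by (simp add: sc_def)

lemma sc_mult: "sc (F * G) = sc F * sc G"
proof (rule fps_ext)
  fix n
  have "sc (F * G) $ n = (\<Sum>i=0..n. x ^ n * (F $ i * G $ (n - i)))"
    by (simp add: fps_mult_nth sum_distrib_left)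
  also have "\<dots> = (\<Sum>i=0..n. x ^ i * F $ i * (x ^ (n - i) * G $ (n - i)))"
  proof (rule sum.cong[OF refl])
    fix i assume "i \<in> {0..n}"
    then have "x ^ n = x ^ i * x ^ (n - i)" by (simp flip: power_add)
    then show "x ^ n * (F $ i * G $ (n - i)) = x ^ i * F $ i * (x ^ (n - i) * G $ (n - i))"
      by (simp add: algebra_simps)
  qed
  also have "\<dots> = (sc F * sc G) $ n" by (simp add: fps_mult_nth)
  finally show "sc (F * G) $ n = (sc F * sc G) $ n" .
qed

lemma sc_add: "sc (F + G) = sc F + sc G"
  by (rule fps_ext) (simp add: algebra_simps)

lemma sc_diff: "sc (F - G) = sc F - sc G"
  by (rule fps_ext) (simp add: algebra_simps)

definition UU where "UU = Abs_fps uu"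
definition UR where "UR = Abs_fps (\<lambda>j. (-1) ^ j * uu j)"

lemma UB: "UU * sc (qexp_neg_fps q) = UR * sc (qexp_fps q)"
proof (rule fps_ext)
  fix N
  have l: "(UU * sc (qexp_neg_fps q)) $ N = (\<Sum>i\<le>N. uu i * ((- x) ^ (N - i) / qf (N - i)))"
    unfolding fps_mult_nth atLeast0AtMost
    by (rule sum.cong[OF refl]) (simp add: UU_def qexp_neg_fps_def power_minus[of x])
  have r: "(UR * sc (qexp_fps q)) $ N = (-1) ^ N * (\<Sum>i\<le>N. uu i * ((- x) ^ (N - i) / qf (N - i)))"
    unfolding fps_mult_nth atLeast0AtMost sum_distrib_left
  proof (rule sum.cong[OF refl])
    fix i assume "i \<in> {..N}"
    then have "(-1::'a) ^ N = (-1) ^ i * (-1) ^ (N - i)" by (simp flip: power_add)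
    moreover have "(-1::'a) ^ (N - i) * (-1) ^ (N - i) = 1"
      by (simp flip: power_mult_distrib)
    ultimately have "(-1::'a) ^ i = (-1) ^ N * (-1) ^ (N - i)"
      by (metis mult.assoc mult.right_neutral)
    then show "UR $ i * sc (qexp_fps q) $ (N - i) = (-1) ^ N * (uu i * ((- x) ^ (N - i) / qf (N - i)))"
      by (simp add: UR_def qexp_fps_def power_minus[of x])
  qed
  show "(UU * sc (qexp_neg_fps q)) $ N = (UR * sc (qexp_fps q)) $ N"
  proof (cases "odd N")
    case True
    then show ?thesis unfolding l r using key_odd[OF True] by simp
  next
    case False
    then show ?thesis unfolding l r by simp
  qed
qed


lemma TA: "qtan_fps q * (qexp_fps q + qexp_neg_fps q) = qexp_fps q - qexp_neg_fps q"
proof -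
  have z: "(qexp_fps q + qexp_neg_fps q) $ 0 \<noteq> 0"
    by (simp add: qexp_fps_def qexp_neg_fps_def)
  show ?thesis unfolding qtan_fps_def fps_divide_unit[OF z] mult.assoc
    using inverse_mult_eq_1[OF z] by simp
qed

lemma main_fps: "UU - UR = sc (qtan_fps q) * (UU + UR)"
proof -
  define S where "S = sc (qexp_fps q) + sc (qexp_neg_fps q)"
  have S0: "S $ 0 \<noteq> 0" by (simp add: S_def qexp_fps_def qexp_neg_fps_def)
  have T: "sc (qtan_fps q) * S = sc (qexp_fps q) - sc (qexp_neg_fps q)"
    unfolding S_def sc_mult[symmetric] sc_add[symmetric] TA sc_diff ..
  have "(UU - UR) * S = (UU + UR) * (sc (qexp_fps q) - sc (qexp_neg_fps q))"
    using UB unfolding S_def by (simp add: algebra_simps)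
  also have "\<dots> = (sc (qtan_fps q) * (UU + UR)) * S"
    unfolding T[symmetric] by (simp add: algebra_simps)
  finally have e: "(UU - UR) * S = (sc (qtan_fps q) * (UU + UR)) * S" .
  have "UU - UR = (UU - UR) * S * inverse S"
    using inverse_mult_eq_1'[OF S0] by (simp add: mult.assoc)
  also have "\<dots> = sc (qtan_fps q) * (UU + UR) * S * inverse S" unfolding e ..
  also have "\<dots> = sc (qtan_fps q) * (UU + UR)"
    using inverse_mult_eq_1'[OF S0] by (simp add: mult.assoc)
  finally show ?thesis .
qed

lemma sum_split_odd: "(\<Sum>i=0..2*n+1. h i) = (\<Sum>k\<le>n. h (2*k) + h (2*k+1))" for h :: "nat \<Rightarrow> 'a"
proof (induction n)
  case 0 then show ?case by (simp add: atLeast0_atMost_Suc)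
next
  case (Suc n)
  have "(\<Sum>i=0..2*Suc n+1. h i) = (\<Sum>i=0..Suc (Suc (2*n+1)). h i)" by simp
  also have "\<dots> = (\<Sum>i=0..2*n+1. h i) + h (2*n+2) + h (2*n+3)"
    by (simp only: sum.atLeast0_atMost_Suc) (simp add: numeral_3_eq_3)
  finally have "(\<Sum>i=0..2*Suc n+1. h i) = (\<Sum>i=0..2*n+1. h i) + h (2*n+2) + h (2*n+3)" .
  then show ?case using Suc.IH by simp
qed

lemma uu_odd: "uu (2 * n + 1) = (\<Sum>k\<le>n. x ^ (2*k+1) * qtan_fps q $ (2*k+1) * uu (2 * n - 2 * k))"
proof -
  have "(UU - UR) $ (2*n+1) = (sc (qtan_fps q) * (UU + UR)) $ (2*n+1)" using main_fps by simp
  moreover have "(UU - UR) $ (2*n+1) = 2 * uu (2*n+1)" by (simp add: UU_def UR_def)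
  moreover have "(sc (qtan_fps q) * (UU + UR)) $ (2*n+1) = 2 * (\<Sum>k\<le>n. x ^ (2*k+1) * qtan_fps q $ (2*k+1) * uu (2 * n - 2 * k))"
  proof -
    have "(sc (qtan_fps q) * (UU + UR)) $ (2*n+1) = (\<Sum>i=0..2*n+1. x ^ i * qtan_fps q $ i * (uu (2*n+1-i) + (-1) ^ (2*n+1-i) * uu (2*n+1-i)))"
      by (simp add: fps_mult_nth UU_def UR_def)
    also have "\<dots> = (\<Sum>k\<le>n. x ^ (2*k) * qtan_fps q $ (2*k) * (uu (2*n+1-2*k) + (-1) ^ (2*n+1-2*k) * uu (2*n+1-2*k))
        + x ^ (2*k+1) * qtan_fps q $ (2*k+1) * (uu (2*n+1-(2*k+1)) + (-1) ^ (2*n+1-(2*k+1)) * uu (2*n+1-(2*k+1))))"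
      by (rule sum_split_odd)
    also have "\<dots> = (\<Sum>k\<le>n. 2 * (x ^ (2*k+1) * qtan_fps q $ (2*k+1) * uu (2 * n - 2 * k)))"
    proof (rule sum.cong[OF refl])
      fix k assume "k \<in> {..n}"
      then have k: "k \<le> n" by simp
      have o: "odd (2*n+1-2*k)" using k by presburger
      have ev: "even (2*n+1-(2*k+1))" using k by presburger
      have e2: "2*n+1-(2*k+1) = 2*n-2*k" by simp
      show "x ^ (2*k) * qtan_fps q $ (2*k) * (uu (2*n+1-2*k) + (-1) ^ (2*n+1-2*k) * uu (2*n+1-2*k))
        + x ^ (2*k+1) * qtan_fps q $ (2*k+1) * (uu (2*n+1-(2*k+1)) + (-1) ^ (2*n+1-(2*k+1)) * uu (2*n+1-(2*k+1)))
        = 2 * (x ^ (2*k+1) * qtan_fps q $ (2*k+1) * uu (2 * n - 2 * k))"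
        using o ev unfolding e2 by simp
    qed
    also have "\<dots> = 2 * (\<Sum>k\<le>n. x ^ (2*k+1) * qtan_fps q $ (2*k+1) * uu (2 * n - 2 * k))"
      by (simp add: sum_distrib_left)
    finally show ?thesis .
  qed
  ultimately show ?thesis by simp
qed


lemma term_eq:
  assumes k: "k \<le> n"
  shows "qf (2*n+1) * qf (2*m+2*n) / (qf (m+2*n) * cc (m+2*n)) * (x ^ (2*k+1) * qtan_fps q $ (2*k+1) * uu (2 * n - 2 * k))
    = (- 1) ^ k * qbinom q (2 * n + 1) (2 * k + 1)
        * ((qfact q (2 * m + 2 * n) * qfact q (m + 2 * n - 2 * k - 1))
           / (qfact q (m + 2 * n) * qfact q (2 * m + 2 * n - 2 * k - 1)))
        * ((qtangent q k * x ^ (2 * k + 1)) / qpoch (- (q ^ (m + 2 * n - 2 * k))) q (2 * k + 1))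
        * vpoly x s m q (2 * n - 2 * k)"
proof -
  define a where "a = m + 2*n - 2*k - 1"
  have a1: "a + (2*k+1) = m + 2*n" and a2: "a + 1 = m + 2*n - 2*k" using k m1 by (auto simp: a_def)
  have cs: "cc (m + 2*n) = cc a * qpoch (- (q ^ (m + 2*n - 2*k))) q (2*k+1)"
    using cc_shift[of a "2*k+1"] unfolding a1 a2 .
  have pnz: "qpoch (- (q ^ (m + 2*n - 2*k))) q (2*k+1) \<noteq> 0"
    using qpoch_nz[of a "2*k+1"] unfolding a2 .
  have qt: "qtangent q k = (-1) ^ k * qf (2*k+1) * qtan_fps q $ (2*k+1)"
    by (simp add: qtangent_def)
  have qb: "qbinom q (2 * n + 1) (2 * k + 1) = qf (2*n+1) / (qf (2*k+1) * qf (2*n-2*k))"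
  proof -
    have "2 * n + 1 - (2 * k + 1) = 2*n-2*k" by simp
    then show ?thesis by (simp add: qbinom_def)
  qed
  have uu: "uu (2*n-2*k) = vpoly x s m q (2 * n - 2 * k) * qf a * cc a / (qf (2*n-2*k) * qf (2*m+2*n-2*k-1))"
  proof -
    have "m + (2*n-2*k) - 1 = a" "2 * m + (2*n-2*k) - 1 = 2*m+2*n-2*k-1" using k m1 by (auto simp: a_def)
    then show ?thesis by (simp add: uu_def)
  qed
  have ma: "m + 2 * n - 2 * k - 1 = a" by (simp add: a_def)
  have sq: "(-1::'a) ^ k * (-1) ^ k = 1" by (simp flip: power_mult_distrib)
  show ?thesis
    unfolding qt qb uu cs ma
    using pnz sq qf_nz[of "2*n+1"] qf_nz[of "2*m+2*n"] qf_nz[of "m+2*n"] qf_nz[of a] qf_nz[of "2*k+1"]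
      qf_nz[of "2*n-2*k"] qf_nz[of "2*m+2*n-2*k-1"] cc_nz[of a]
    by (simp add: field_simps)
qed

lemma final:
  "vpoly x s m q (2 * n + 1) =
    (\<Sum>k\<le>n. (- 1) ^ k * qbinom q (2 * n + 1) (2 * k + 1)
        * ((qfact q (2 * m + 2 * n) * qfact q (m + 2 * n - 2 * k - 1))
           / (qfact q (m + 2 * n) * qfact q (2 * m + 2 * n - 2 * k - 1)))
        * ((qtangent q k * x ^ (2 * k + 1)) / qpoch (- (q ^ (m + 2 * n - 2 * k))) q (2 * k + 1))
        * vpoly x s m q (2 * n - 2 * k))"
proof -
  define Fac where "Fac = qf (2*n+1) * qf (2*m+2*n) / (qf (m+2*n) * cc (m+2*n))"
  have "vpoly x s m q (2 * n + 1) = Fac * uu (2 * n + 1)"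
  proof -
    have "m + (2*n+1) - 1 = m + 2*n" "2 * m + (2*n+1) - 1 = 2*m+2*n" by auto
    then show ?thesis unfolding Fac_def uu_def
      using qf_nz[of "2*n+1"] qf_nz[of "2*m+2*n"] qf_nz[of "m+2*n"] cc_nz[of "m+2*n"]
      by (simp add: field_simps)
  qed
  also have "\<dots> = (\<Sum>k\<le>n. Fac * (x ^ (2*k+1) * qtan_fps q $ (2*k+1) * uu (2 * n - 2 * k)))"
    by (simp only: uu_odd sum_distrib_left)
  also have "\<dots> = (\<Sum>k\<le>n. (- 1) ^ k * qbinom q (2 * n + 1) (2 * k + 1)
        * ((qfact q (2 * m + 2 * n) * qfact q (m + 2 * n - 2 * k - 1))
           / (qfact q (m + 2 * n) * qfact q (2 * m + 2 * n - 2 * k - 1)))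
        * ((qtangent q k * x ^ (2 * k + 1)) / qpoch (- (q ^ (m + 2 * n - 2 * k))) q (2 * k + 1))
        * vpoly x s m q (2 * n - 2 * k))"
    unfolding Fac_def by (rule sum.cong[OF refl]) (rule term_eq, simp)
  finally show ?thesis .
qed

end

theorem mainTheorem19:
  fixes x s q :: "'a::field_char_0" and m n :: nat
  assumes "m \<ge> 1"
    and "\<And>j. j \<ge> 1 \<Longrightarrow> qint q j \<noteq> 0"
    and "\<And>j. j \<ge> 1 \<Longrightarrow> 1 + q ^ j \<noteq> 0"
  shows "vpoly x s m q (2 * n + 1) =
    (\<Sum>k\<le>n. (- 1) ^ k * qbinom q (2 * n + 1) (2 * k + 1)
        * ((qfact q (2 * m + 2 * n) * qfact q (m + 2 * n - 2 * k - 1))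
           / (qfact q (m + 2 * n) * qfact q (2 * m + 2 * n - 2 * k - 1)))
        * ((qtangent q k * x ^ (2 * k + 1)) / qpoch (- (q ^ (m + 2 * n - 2 * k))) q (2 * k + 1))
        * vpoly x s m q (2 * n - 2 * k))"
proof -
  interpret vctx q x s m
    by unfold_locales (use assms in auto)
  show ?thesis by (rule final)
qed

end
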